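(* Let $t\in\mathfrak{T}_2$ with $t>0$ on $\mathbb{T}^2$ and $n_1(t)\ge1$. Then for every $z\in\mathbb{A}_{\sigma_1(t)}$, $$\Re\,\Gamma_zt\ge\tfrac12\min t\ \text{ on }\mathbb{T},\qquad \|\Gamma_zt\|_\infty\le\|t\|_\infty+\tfrac12\min t,\qquad \rho(\Gamma_zt)\ge\rho(t)/(2e).$$
   Context: $\mathbb{T}=\mathbb{R}/\mathbb{Z}$, $e_j(x)=e^{2\pi i jx}$, $e_{(j,k)}(x,y)=e_j(x)e_k(y)$. $\mathfrak{T}_d$: trigonometric polynomials on $\mathbb{T}^d$. For $t\in\mathfrak{T}_2$: $\|\widehat t\|_1=\sum_{(j,k)}|\widehat t(j,k)|$, $n_1(t)=\max\{|j|:\widehat t(j,k)\ne0\text{ for some }k\}$, $\rho(t)=\min\{1,\min t/(2e\|\widehat t\|_1)\}$, $\sigma_1(t)=\rho(t)/n_1(t)$. For $z\in\mathbb{C}\setminus\{0\}$, $\Gamma_z:\mathfrak{T}_2\to\mathfrak{T}_1$ is the linear map with $\Gamma_ze_{(j,k)}=z^je_k$. For $s\in\mathfrak{T}_1$ with $\Re s>0$, $\rho(s)=\min\{1,\min\Re s/(2e\|\widehat s\|_1)\}$ with $\|\widehat s\|_1=\sum_k|\widehat s(k)|$. $\mathbb{A}_\sigma=\{z:e^{-\sigma}\le|z|\le e^\sigma\}$. *)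

theory Defs
  imports "HOL-Analysis.Analysis"
begin

text \<open>A trigonometric polynomial on T^2 is represented by its Fourier coefficient
  function c :: int \<times> int \<Rightarrow> complex with finite support; on T by d :: int \<Rightarrow> complex
  with finite support. Points of T are represented by reals (functions are 1-periodic).\<close>

definition trig2 :: "(int \<times> int \<Rightarrow> complex) \<Rightarrow> bool" where
  "trig2 c \<longleftrightarrow> finite {p. c p \<noteq> 0}"

definition trig1 :: "(int \<Rightarrow> complex) \<Rightarrow> bool" where
  "trig1 d \<longleftrightarrow> finite {k. d k \<noteq> 0}"

definition ee :: "int \<Rightarrow> real \<Rightarrow> complex" where
  "ee j x = exp (2 * pi * \<i> * of_int j * of_real x)"

definition tval2 :: "(int \<times> int \<Rightarrow> complex) \<Rightarrow> real \<Rightarrow> real \<Rightarrow> complex" where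
  "tval2 c x y = (\<Sum>p\<in>{p. c p \<noteq> 0}. c p * ee (fst p) x * ee (snd p) y)"

definition tval1 :: "(int \<Rightarrow> complex) \<Rightarrow> real \<Rightarrow> complex" where
  "tval1 d y = (\<Sum>k\<in>{k. d k \<noteq> 0}. d k * ee k y)"

definition l1norm2 :: "(int \<times> int \<Rightarrow> complex) \<Rightarrow> real" where
  "l1norm2 c = (\<Sum>p\<in>{p. c p \<noteq> 0}. cmod (c p))"

definition l1norm1 :: "(int \<Rightarrow> complex) \<Rightarrow> real" where
  "l1norm1 d = (\<Sum>k\<in>{k. d k \<noteq> 0}. cmod (d k))"

definition n1 :: "(int \<times> int \<Rightarrow> complex) \<Rightarrow> int" where
  "n1 c = Max ((\<lambda>p. \<bar>fst p\<bar>) ` {p. c p \<noteq> 0})"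

text \<open>min t (t real-valued, so we take the real part).\<close>
definition min2 :: "(int \<times> int \<Rightarrow> complex) \<Rightarrow> real" where
  "min2 c = (INF xy. Re (tval2 c (fst xy) (snd xy)))"

definition minRe1 :: "(int \<Rightarrow> complex) \<Rightarrow> real" where
  "minRe1 d = (INF y. Re (tval1 d y))"

definition supnorm2 :: "(int \<times> int \<Rightarrow> complex) \<Rightarrow> real" where
  "supnorm2 c = (SUP xy. cmod (tval2 c (fst xy) (snd xy)))"

definition supnorm1 :: "(int \<Rightarrow> complex) \<Rightarrow> real" where
  "supnorm1 d = (SUP y. cmod (tval1 d y))"

definition rho2 :: "(int \<times> int \<Rightarrow> complex) \<Rightarrow> real" where
  "rho2 c = min 1 (min2 c / (2 * exp 1 * l1norm2 c))"

definition rho1 :: "(int \<Rightarrow> complex) \<Rightarrow> real" where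
  "rho1 d = min 1 (minRe1 d / (2 * exp 1 * l1norm1 d))"

definition sigma1 :: "(int \<times> int \<Rightarrow> complex) \<Rightarrow> real" where
  "sigma1 c = rho2 c / of_int (n1 c)"

text \<open>Gamma_z : e_(j,k) \<mapsto> z^j e_k, on coefficients.\<close>
definition Gamma :: "complex \<Rightarrow> (int \<times> int \<Rightarrow> complex) \<Rightarrow> (int \<Rightarrow> complex)" where
  "Gamma z c = (\<lambda>k. \<Sum>p\<in>{p. c p \<noteq> 0 \<and> snd p = k}. c p * z powi (fst p))"

definition annulus :: "real \<Rightarrow> complex set" where
  "annulus s = {z. exp (- s) \<le> cmod z \<and> cmod z \<le> exp s}"

end

theory Submission
  imports Defs
begin

lemma norm_ee[simp]: "cmod (ee j x) = 1"
  unfolding ee_def by (simp add: norm_exp_eq_Re)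

lemma tval1_Gamma:
  assumes "trig2 c"
  shows "tval1 (Gamma z c) y = (\<Sum>p\<in>{p. c p \<noteq> 0}. c p * z powi fst p * ee (snd p) y)"
proof -
  let ?S = "{p. c p \<noteq> 0}"
  have fS: "finite ?S" using assms unfolding trig2_def .
  have sub: "{k. Gamma z c k \<noteq> 0} \<subseteq> snd ` ?S"
  proof
    fix k assume "k \<in> {k. Gamma z c k \<noteq> 0}"
    have "{p. c p \<noteq> 0 \<and> snd p = k} \<noteq> {}" 
    proof (rule notI)
      assume "{p. c p \<noteq> 0 \<and> snd p = k} = {}"
      then have "Gamma z c k = 0" unfolding Gamma_def by (simp only: sum.empty)
      with \<open>k \<in> {k. Gamma z c k \<noteq> 0}\<close> show False by simp
    qed
    then show "k \<in> snd ` ?S" by force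
  qed
  have "tval1 (Gamma z c) y = (\<Sum>k\<in>snd ` ?S. Gamma z c k * ee k y)"
    unfolding tval1_def
    by (rule sum.mono_neutral_left) (use fS sub in auto)
  also have "\<dots> = (\<Sum>k\<in>snd ` ?S. (\<Sum>p\<in>{p. p \<in> ?S \<and> snd p = k}. c p * z powi fst p * ee (snd p) y))"
    unfolding Gamma_def by (rule sum.cong) (auto simp: sum_distrib_right)
  also have "\<dots> = (\<Sum>p\<in>?S. c p * z powi fst p * ee (snd p) y)"
    by (rule sum.group) (use fS in auto)
  finally show ?thesis .
qed

lemma l1norm1_Gamma:
  assumes "trig2 c"
  shows "l1norm1 (Gamma z c) \<le> (\<Sum>p\<in>{p. c p \<noteq> 0}. cmod (c p) * cmod (z powi fst p))"
proof -
  let ?S = "{p. c p \<noteq> 0}"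
  have fS: "finite ?S" using assms unfolding trig2_def .
  have sub: "{k. Gamma z c k \<noteq> 0} \<subseteq> snd ` ?S"
  proof
    fix k assume "k \<in> {k. Gamma z c k \<noteq> 0}"
    have "{p. c p \<noteq> 0 \<and> snd p = k} \<noteq> {}" 
    proof (rule notI)
      assume "{p. c p \<noteq> 0 \<and> snd p = k} = {}"
      then have "Gamma z c k = 0" unfolding Gamma_def by (simp only: sum.empty)
      with \<open>k \<in> {k. Gamma z c k \<noteq> 0}\<close> show False by simp
    qed
    then show "k \<in> snd ` ?S" by force
  qed
  have "l1norm1 (Gamma z c) = (\<Sum>k\<in>snd ` ?S. cmod (Gamma z c k))"
    unfolding l1norm1_def
    by (rule sum.mono_neutral_left) (use fS sub in auto)
  also have "\<dots> \<le> (\<Sum>k\<in>snd ` ?S. (\<Sum>p\<in>{p. p \<in> ?S \<and> snd p = k}. cmod (c p) * cmod (z powi fst p)))"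
    unfolding Gamma_def
    by (rule sum_mono) (auto intro!: order.trans[OF norm_sum] simp: norm_mult)
  also have "\<dots> = (\<Sum>p\<in>?S. cmod (c p) * cmod (z powi fst p))"
    by (rule sum.group) (use fS in auto)
  finally show ?thesis .
qed

lemma tval1_le: "cmod (tval1 d y) \<le> l1norm1 d"
  unfolding tval1_def l1norm1_def
  by (rule order.trans[OF norm_sum]) (simp add: norm_mult)

lemma tval2_le: "cmod (tval2 c x y) \<le> l1norm2 c"
  unfolding tval2_def l1norm2_def
  by (rule order.trans[OF norm_sum]) (simp add: norm_mult)

lemma exp_sub_one_bound: "\<bar>exp u - 1\<bar> \<le> \<bar>u\<bar> * exp \<bar>u\<bar>" for u :: real
proof (cases "u \<ge> 0")
  case True
  have "1 - u \<le> exp (-u)" using exp_ge_add_one_self[of "-u"] by simp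
  then have "(1 - u) * exp u \<le> exp (-u) * exp u" by (simp add: mult_right_mono)
  then have "(1 - u) * exp u \<le> 1" by (simp add: exp_minus field_simps)
  with True show ?thesis by (simp add: algebra_simps)
next
  case False
  have "1 + u \<le> exp u" using exp_ge_add_one_self[of u] by simp
  moreover have "exp u \<le> 1" using False by simp
  moreover have "1 \<le> exp \<bar>u\<bar>" by simp
  ultimately show ?thesis using False
    by (smt (verit, best) mult_le_cancel_left1)
qed


theorem mainTheorem11:
  fixes c :: "int \<times> int \<Rightarrow> complex" and z :: complex
  assumes "trig2 c"
    and "\<forall>x y. Im (tval2 c x y) = 0 \<and> Re (tval2 c x y) > 0"
    and "n1 c \<ge> 1"
    and "z \<in> annulus (sigma1 c)"
  shows "(\<forall>y. Re (tval1 (Gamma z c) y) \<ge> min2 c / 2)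
    \<and> supnorm1 (Gamma z c) \<le> supnorm2 c + min2 c / 2
    \<and> rho1 (Gamma z c) \<ge> rho2 c / (2 * exp 1)"
proof -
  define S where "S = {p. c p \<noteq> 0}"
  define L where "L = l1norm2 c"
  define m where "m = min2 c"
  define \<rho> where "\<rho> = rho2 c"
  define \<sigma> where "\<sigma> = sigma1 c"
  define N where "N = n1 c"
  have fS: "finite S" using assms(1) unfolding trig2_def S_def .
  have pos: "Re (tval2 c x y) > 0" for x y using assms(2) by blast
  have bddb: "bdd_below (range (\<lambda>xy. Re (tval2 c (fst xy) (snd xy))))"
    by (rule bdd_belowI[of _ 0]) (auto intro: less_imp_le pos)
  have m_le: "m \<le> Re (tval2 c x y)" for x y
    unfolding m_def min2_def using cINF_lower[OF bddb, of "(x,y)"] by simp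
  have m_ge: "m \<ge> 0"
    unfolding m_def min2_def by (rule cINF_greatest) (auto intro: less_imp_le pos)
  have L_ge: "L \<ge> 0" unfolding L_def l1norm2_def by (simp add: sum_nonneg)
  have rho_le: "\<rho> \<le> 1" unfolding \<rho>_def rho2_def by simp
  have rho_ge: "\<rho> \<ge> 0" unfolding \<rho>_def rho2_def using m_ge L_ge
    by (simp add: m_def L_def)
  have Npos: "N \<ge> 1" using assms(3) N_def by simp
  have Nbound: "\<bar>fst p\<bar> \<le> N" if "p \<in> S" for p
    unfolding N_def n1_def using fS that S_def by (auto intro!: Max_ge)
  have sigma_eq: "\<sigma> = \<rho> / of_int N" unfolding \<sigma>_def sigma1_def \<rho>_def N_def by simp
  have sigma_ge: "\<sigma> \<ge> 0" using sigma_eq rho_ge Npos by simp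
  define r where "r = cmod z"
  have ann: "exp (- \<sigma>) \<le> r" "r \<le> exp \<sigma>" using assms(4) unfolding annulus_def r_def \<sigma>_def by auto
  have rpos: "r > 0" using ann(1) by (smt (verit) exp_gt_zero)
  have z0: "z \<noteq> 0" using rpos r_def by auto
  define s where "s = ln r"
  have s_bd: "\<bar>s\<bar> \<le> \<sigma>"
  proof -
    have "-\<sigma> \<le> s" using ann(1) rpos unfolding s_def by (simp add: ln_ge_iff)
    moreover have "s \<le> \<sigma>" using ann(2) rpos unfolding s_def by (metis exp_gt_zero ln_exp ln_le_cancel_iff)
    ultimately show ?thesis by simp
  qed
  have js_bd: "\<bar>of_int (fst p) * s\<bar> \<le> \<rho>" if "p \<in> S" for p
  proof -
    have "\<bar>of_int (fst p) * s\<bar> = real_of_int \<bar>fst p\<bar> * \<bar>s\<bar>" by (simp add: abs_mult)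
    also have "\<dots> \<le> real_of_int N * \<sigma>"
      using Nbound[OF that] s_bd sigma_ge by (intro mult_mono) auto
    also have "\<dots> = \<rho>" using sigma_eq Npos by simp
    finally show ?thesis .
  qed
  define x0 where "x0 = Arg z / (2 * pi)"
  define w where "w = complex_of_real s + \<i> * complex_of_real (Arg z)"
  have zw: "z = exp w"
  proof -
    have "z = of_real r * exp (\<i> * Arg z)" using Arg_eq[OF z0] r_def by simp
    also have "of_real r = exp (complex_of_real s)" using rpos s_def by (simp add: exp_of_real)
    finally show ?thesis unfolding w_def by (simp add: exp_add)
  qed
  have zp: "z powi j = complex_of_real (exp (of_int j * s)) * ee j x0" for j
  proof -
    have "z powi j = exp (of_int j * w)" using zw exp_power_int by simp
    also have "of_int j * w = complex_of_real (of_int j * s) + 2 * pi * \<i> * of_int j * of_real x0"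
      unfolding w_def x0_def by (simp add: algebra_simps)
    finally show ?thesis unfolding ee_def by (simp add: exp_add flip: exp_of_real)
  qed
  have ep: "exp (of_int (fst p) * s) \<le> exp 1" if "p \<in> S" for p
    using js_bd[OF that] rho_le by simp
  have em1: "\<bar>exp (of_int (fst p) * s) - 1\<bar> \<le> \<rho> * exp 1" if "p \<in> S" for p
  proof -
    have "\<bar>exp (of_int (fst p) * s) - 1\<bar> \<le> \<bar>of_int (fst p) * s\<bar> * exp \<bar>of_int (fst p) * s\<bar>"
      by (rule exp_sub_one_bound)
    also have "\<dots> \<le> \<rho> * exp 1"
      using js_bd[OF that] rho_le by (intro mult_mono) auto
    finally show ?thesis .
  qed
  have Lrho: "L * (\<rho> * exp 1) \<le> m / 2"
  proof (cases "L = 0")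
    case True then show ?thesis using m_ge by simp
  next
    case False
    then have Lp: "L > 0" using L_ge by simp
    have "\<rho> \<le> m / (2 * exp 1 * L)" unfolding \<rho>_def rho2_def m_def L_def by simp
    then have "\<rho> * (2 * exp 1 * L) \<le> m" using Lp by (simp add: pos_le_divide_eq)
    then show ?thesis by (simp add: algebra_simps)
  qed
  have diff: "cmod (tval1 (Gamma z c) y - tval2 c x0 y) \<le> m / 2" for y
  proof -
    have "tval1 (Gamma z c) y - tval2 c x0 y
      = (\<Sum>p\<in>S. c p * complex_of_real (exp (of_int (fst p) * s) - 1) * ee (fst p) x0 * ee (snd p) y)"
      unfolding tval1_Gamma[OF assms(1)] tval2_def S_def[symmetric] zp
      by (simp add: sum_subtractf[symmetric] algebra_simps)
    also have "cmod \<dots> \<le> (\<Sum>p\<in>S. cmod (c p) * (\<rho> * exp 1))"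
    proof (rule order.trans[OF norm_sum], rule sum_mono)
      fix p assume pS: "p \<in> S"
      have "cmod (complex_of_real (exp (of_int (fst p) * s)) - 1) \<le> \<rho> * exp 1"
        using em1[OF pS] by (metis norm_of_real of_real_1 of_real_diff)
      then show "cmod (c p * complex_of_real (exp (of_int (fst p) * s) - 1) * ee (fst p) x0 * ee (snd p) y)
          \<le> cmod (c p) * (\<rho> * exp 1)"
        by (simp add: norm_mult mult_left_mono)
    qed
    also have "\<dots> = L * (\<rho> * exp 1)" unfolding L_def l1norm2_def S_def by (simp add: sum_distrib_right)
    finally show ?thesis using Lrho by simp
  qed
  have c1: "Re (tval1 (Gamma z c) y) \<ge> m / 2" for y
  proof -
    have "Re (tval2 c x0 y) - Re (tval1 (Gamma z c) y) \<le> cmod (tval1 (Gamma z c) y - tval2 c x0 y)"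
      by (smt (verit) abs_Re_le_cmod minus_complex.simps(1))
    then show ?thesis using diff[of y] m_le[of x0 y] by simp
  qed
  have bdda: "bdd_above (range (\<lambda>xy. cmod (tval2 c (fst xy) (snd xy))))"
    by (rule bdd_aboveI[of _ L]) (auto simp: L_def tval2_le)
  have c2: "supnorm1 (Gamma z c) \<le> supnorm2 c + m / 2"
    unfolding supnorm1_def
  proof (rule cSUP_least)
    fix y
    have "cmod (tval2 c x0 y) \<le> supnorm2 c"
      unfolding supnorm2_def using cSUP_upper[OF _ bdda, of "(x0,y)"] by simp
    moreover have "cmod (tval1 (Gamma z c) y) \<le> cmod (tval2 c x0 y) + cmod (tval1 (Gamma z c) y - tval2 c x0 y)"
      by (metis add.commute diff_add_cancel norm_triangle_ineq)
    ultimately show "cmod (tval1 (Gamma z c) y) \<le> supnorm2 c + m / 2" using diff[of y] by simp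
  qed simp
  define M1 where "M1 = minRe1 (Gamma z c)"
  define L1 where "L1 = l1norm1 (Gamma z c)"
  have M1_ge: "M1 \<ge> m / 2" unfolding M1_def minRe1_def by (rule cINF_greatest) (use c1 in auto)
  have L1_ge: "L1 \<ge> 0" unfolding L1_def l1norm1_def by (simp add: sum_nonneg)
  have L1_le: "L1 \<le> exp 1 * L"
  proof -
    have "L1 \<le> (\<Sum>p\<in>S. cmod (c p) * cmod (z powi fst p))"
      unfolding L1_def S_def by (rule l1norm1_Gamma[OF assms(1)])
    also have "\<dots> \<le> (\<Sum>p\<in>S. cmod (c p) * exp 1)"
      by (rule sum_mono) (auto simp: zp norm_mult intro!: mult_left_mono ep)
    also have "\<dots> = exp 1 * L" unfolding L_def l1norm2_def S_def by (simp add: sum_distrib_left mult.commute)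
    finally show ?thesis .
  qed
  have c3: "rho1 (Gamma z c) \<ge> \<rho> / (2 * exp 1)"
  proof (cases "m = 0")
    case True
    then have "\<rho> = 0" unfolding \<rho>_def rho2_def m_def by simp
    moreover have "rho1 (Gamma z c) \<ge> 0" unfolding rho1_def
      using M1_ge L1_ge True by (simp add: M1_def[symmetric] L1_def[symmetric])
    ultimately show ?thesis by simp
  next
    case False
    then have mp: "m > 0" using m_ge by simp
    have Lp: "L > 0" using m_le[of 0 0] tval2_le[of c 0 0] mp abs_Re_le_cmod[of "tval2 c 0 0"]
      unfolding L_def by linarith
    have L1p: "L1 > 0" using c1[of 0] tval1_le[of "Gamma z c" 0] mp abs_Re_le_cmod[of "tval1 (Gamma z c) 0"]
      unfolding L1_def by linarith
    have e1: "exp 1 \<ge> (1::real)" by simp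
    have "\<rho> / (2 * exp 1) \<le> (m / (2 * exp 1 * L)) / (2 * exp 1)"
      unfolding \<rho>_def rho2_def m_def L_def by (intro divide_right_mono) auto
    also have "\<dots> = (m / 2) / (2 * exp 1 * (exp 1 * L))" by (simp add: field_simps)
    also have "\<dots> \<le> M1 / (2 * exp 1 * L1)"
      using M1_ge L1_le L1p mp Lp
      by (intro frac_le mult_left_mono) auto
    finally have a: "\<rho> / (2 * exp 1) \<le> M1 / (2 * exp 1 * L1)" .
    have b: "\<rho> / (2 * exp 1) \<le> 1" proof -
      have "\<rho> \<le> exp 1 * 2" using rho_le e1 by linarith
      then show ?thesis by (simp add: field_simps)
    qed
    show ?thesis unfolding rho1_def using a b by (simp add: M1_def L1_def)
  qed
  show ?thesis using c1 c2 c3 unfolding m_def \<rho>_def by simp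
qed

end
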